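(* Let $2\le n\le m$. Let $u^0$ be the vertex of $Y_{n,m}$ with $u^0_i=1$ for all $1\le i\le m$ and $u^0_0\equiv-\lfloor (m-n)/2\rfloor\pmod n$, and let $d_0=d(u^0,0)$. Then (1) $d_0=\binom{\lfloor (m+n)/2\rfloor+1}{2}+\binom{\lceil (m-n)/2\rceil+1}{2}$; (2) if $2\nmid(m-n)$, let $u^1$ be the vertex with $u^1_i=0$ for $i=\lceil (m+1)/2\rceil$, $u^1_i=1$ for all other $1\le i\le m$, and $u^1_0\equiv-\lfloor (m-n)/2\rfloor\pmod n$; then $d(u^1,0)=d_0+n-\lceil (m+1)/2\rceil$.
   Context: The Yoke graph $Y_{n,m}$ has vertices the tuples $v=(v_0,\dots,v_{m+1})$ with $v_0,v_{m+1}\in\mathbb{Z}_n$, $v_1,\dots,v_m\in\{0,1\}$, $\sum v_i\equiv0\pmod n$ (so a vertex is determined by $v_0,\dots,v_m$); $u\sim v$ iff there is $0\le i\le m$ with $u_j=v_j$ for $j\notin\{i,i+1\}$ and either ($u_i=v_i+1$, $u_{i+1}=v_{i+1}-1$) or ($u_i=v_i-1$, $u_{i+1}=v_{i+1}+1$), buckets mod $n$. $0$ is the all-zero vertex and $d$ is graph distance. *)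

theory Defs
  imports Main
begin

text \<open>A vertex of the Yoke graph Y_{n,m} is encoded as a function v :: nat => int,
  where v 0 and v (m+1) are canonical representatives in {0..n-1} of Z_n,
  v 1, ..., v m are in {0,1}, v i = 0 for i > m+1, and the total sum is 0 mod n.\<close>

definition yoke_vert :: "nat \<Rightarrow> nat \<Rightarrow> (nat \<Rightarrow> int) \<Rightarrow> bool" where
  "yoke_vert n m v \<longleftrightarrow>
     0 \<le> v 0 \<and> v 0 < int n \<and> 0 \<le> v (Suc m) \<and> v (Suc m) < int n \<and>
     (\<forall>i. 1 \<le> i \<and> i \<le> m \<longrightarrow> v i \<in> {0, 1}) \<and>
     (\<forall>i. i > Suc m \<longrightarrow> v i = 0) \<and>
     (\<Sum>i\<le>Suc m. v i) mod int n = 0"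

definition yoke_eq :: "nat \<Rightarrow> nat \<Rightarrow> nat \<Rightarrow> int \<Rightarrow> int \<Rightarrow> bool" where
  "yoke_eq n m k a b \<longleftrightarrow> (if k = 0 \<or> k = Suc m then a mod int n = b mod int n else a = b)"

definition yoke_adj :: "nat \<Rightarrow> nat \<Rightarrow> (nat \<Rightarrow> int) \<Rightarrow> (nat \<Rightarrow> int) \<Rightarrow> bool" where
  "yoke_adj n m u v \<longleftrightarrow> yoke_vert n m u \<and> yoke_vert n m v \<and>
     (\<exists>i\<le>m. (\<forall>j\<le>Suc m. j \<noteq> i \<and> j \<noteq> Suc i \<longrightarrow> u j = v j) \<and>
        ((yoke_eq n m i (u i) (v i + 1) \<and> yoke_eq n m (Suc i) (u (Suc i)) (v (Suc i) - 1)) \<or>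
         (yoke_eq n m i (u i) (v i - 1) \<and> yoke_eq n m (Suc i) (u (Suc i)) (v (Suc i) + 1))))"

definition yoke_edges :: "nat \<Rightarrow> nat \<Rightarrow> ((nat \<Rightarrow> int) \<times> (nat \<Rightarrow> int)) set" where
  "yoke_edges n m = {(u, v). yoke_adj n m u v}"

definition yoke_dist :: "nat \<Rightarrow> nat \<Rightarrow> (nat \<Rightarrow> int) \<Rightarrow> (nat \<Rightarrow> int) \<Rightarrow> nat" where
  "yoke_dist n m u v = (LEAST k. (u, v) \<in> yoke_edges n m ^^ k)"

text \<open>The vertex determined by v_0, ..., v_m (given by f); v_{m+1} is forced by the sum condition.\<close>
definition yoke_mk :: "nat \<Rightarrow> nat \<Rightarrow> (nat \<Rightarrow> int) \<Rightarrow> (nat \<Rightarrow> int)" where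
  "yoke_mk n m f = (\<lambda>i. if i \<le> m then f i
                         else if i = Suc m then (- (\<Sum>j\<le>m. f j)) mod int n else 0)"

definition yoke_zero :: "nat \<Rightarrow> int" where
  "yoke_zero = (\<lambda>_. 0)"

end

theory Submission
  imports Defs
begin

fun pS :: "(nat \<Rightarrow> int) \<Rightarrow> nat \<Rightarrow> int" where
  "pS u 0 = 0"
| "pS u (Suc j) = pS u j + u (Suc j)"

lemma pS_zero[simp]: "pS (\<lambda>_. 0) j = 0"
  by (induction j) auto

definition gf :: "nat \<Rightarrow> (nat \<Rightarrow> int) \<Rightarrow> int \<Rightarrow> int" where
  "gf m u c = (\<Sum>j\<le>m. \<bar>c + pS u j\<bar>)"

lemma sum_ind_bound:
  fixes a b :: "nat \<Rightarrow> int"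
  assumes "i \<le> m" "\<And>j. j \<le> m \<Longrightarrow> a j \<le> b j + (if j = i then 1 else 0)"
  shows "(\<Sum>j\<le>m. a j) \<le> (\<Sum>j\<le>m. b j) + 1"
proof -
  have "(\<Sum>j\<le>m. a j) \<le> (\<Sum>j\<le>m. b j + (if j = i then 1 else 0))"
    by (rule sum_mono) (use assms in auto)
  also have "\<dots> = (\<Sum>j\<le>m. b j) + 1"
    using assms(1) by (simp add: sum.distrib)
  finally show ?thesis .
qed

lemma edge_lb:
  assumes adj: "yoke_adj n m u w" and m1: "1 \<le> m"
    and cw: "c' mod int n = w 0 mod int n"
  shows "\<exists>c. c mod int n = u 0 mod int n \<and> gf m u c \<le> gf m w c' + 1"
proof -
  from adj obtain i where im: "i \<le> m"
    and oth: "\<forall>j\<le>Suc m. j \<noteq> i \<and> j \<noteq> Suc i \<longrightarrow> u j = w j"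
    and dis: "(yoke_eq n m i (u i) (w i + 1) \<and> yoke_eq n m (Suc i) (u (Suc i)) (w (Suc i) - 1)) \<or>
         (yoke_eq n m i (u i) (w i - 1) \<and> yoke_eq n m (Suc i) (u (Suc i)) (w (Suc i) + 1))"
    unfolding yoke_adj_def by blast
  obtain d :: int where d: "d = 1 \<or> d = -1"
    and e1: "yoke_eq n m i (u i) (w i + d)" and e2: "yoke_eq n m (Suc i) (u (Suc i)) (w (Suc i) - d)"
    using dis by (metis diff_minus_eq_add minus_diff_eq diff_conv_add_uminus)
  have key: "\<exists>c. c mod int n = u 0 mod int n \<and>
     (\<forall>j\<le>m. \<bar>c + pS u j\<bar> \<le> \<bar>c' + pS w j\<bar> + (if j = i then 1 else 0))"
  proof (cases "i = 0")
    case True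
    have u0: "u 0 mod int n = (w 0 + d) mod int n" using e1 True by (simp add: yoke_eq_def)
    have u1: "u 1 = w 1 - d" using e2 True m1 by (simp add: yoke_eq_def)
    have ps: "1 \<le> j \<Longrightarrow> j \<le> m \<Longrightarrow> pS u j = pS w j - d" for j
    proof (induction j)
      case 0 then show ?case by simp
    next
      case (Suc j)
      show ?case
      proof (cases "j = 0")
        case True then show ?thesis using u1 by simp
      next
        case False
        have "u (Suc j) = w (Suc j)" using oth Suc.prems \<open>i = 0\<close> False by auto
        then show ?thesis using Suc False by simp
      qed
    qed
    show ?thesis
    proof (intro exI conjI allI impI)
      show "(c' + d) mod int n = u 0 mod int n" using u0 cw by (metis mod_add_left_eq)
      fix j assume "j \<le> m"
      show "\<bar>c' + d + pS u j\<bar> \<le> \<bar>c' + pS w j\<bar> + (if j = i then 1 else 0)"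
        using ps[of j] \<open>j \<le> m\<close> d True by (cases "j = 0") auto
    qed
  next
    case False
    have u0: "u 0 = w 0" using oth False by auto
    have ui: "u i = w i + d" using e1 False im by (simp add: yoke_eq_def)
    have ui1: "Suc i \<le> m \<Longrightarrow> u (Suc i) = w (Suc i) - d" using e2 by (simp add: yoke_eq_def)
    have ps: "j \<le> m \<Longrightarrow> pS u j = pS w j + (if j = i then d else 0)" for j
    proof (induction j)
      case 0 then show ?case using False by simp
    next
      case (Suc j)
      then have IH: "pS u j = pS w j + (if j = i then d else 0)" by simp
      show ?case
      proof (cases "Suc j = i")
        case True then show ?thesis using IH ui by (simp add: True[symmetric])
      next
        case F2: False
        show ?thesis
        proof (cases "j = i")
          case True then show ?thesis using IH ui1 Suc.prems by simp
        next
          case False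
          have "u (Suc j) = w (Suc j)" using oth Suc.prems False F2 by auto
          then show ?thesis using IH False F2 by simp
        qed
      qed
    qed
    show ?thesis
    proof (intro exI conjI allI impI)
      show "c' mod int n = u 0 mod int n" using u0 cw by simp
      fix j assume "j \<le> m"
      show "\<bar>c' + pS u j\<bar> \<le> \<bar>c' + pS w j\<bar> + (if j = i then 1 else 0)"
        using ps[of j] \<open>j \<le> m\<close> d by auto
    qed
  qed
  then obtain c where c1: "c mod int n = u 0 mod int n"
    and c2: "\<forall>j\<le>m. \<bar>c + pS u j\<bar> \<le> \<bar>c' + pS w j\<bar> + (if j = i then 1 else 0)" by blast
  have "gf m u c \<le> gf m w c' + 1"
    unfolding gf_def by (rule sum_ind_bound[OF im]) (use c2 in auto)
  then show ?thesis using c1 by blast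
qed

lemma lb:
  assumes "(u, yoke_zero) \<in> yoke_edges n m ^^ k" "1 \<le> m"
  shows "\<exists>c. c mod int n = u 0 mod int n \<and> gf m u c \<le> int k"
  using assms(1)
proof (induction k arbitrary: u)
  case 0
  then have "u = yoke_zero" by simp
  then show ?case by (intro exI[of _ 0]) (simp add: gf_def yoke_zero_def)
next
  case (Suc k)
  then obtain w where uw: "(u, w) \<in> yoke_edges n m" and wz: "(w, yoke_zero) \<in> yoke_edges n m ^^ k"
    using relpow_Suc_D2 by metis
  from Suc.IH[OF wz] obtain c' where "c' mod int n = w 0 mod int n" "gf m w c' \<le> int k" by blast
  moreover have "yoke_adj n m u w" using uw by (simp add: yoke_edges_def)
  ultimately show ?case using edge_lb[OF _ assms(2)] by fastforce
qed

lemma step: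
  assumes yv: "yoke_vert n m u" and n2: "2 \<le> n" and m1: "1 \<le> m" and im: "i \<le> m"
    and d: "d = 1 \<or> d = -1"
    and bi: "1 \<le> i \<longrightarrow> u i = (if d = 1 then 1 else 0)"
    and bi1: "Suc i \<le> m \<longrightarrow> u (Suc i) = (if d = 1 then 0 else 1)"
    and cu: "c mod int n = u 0 mod int n"
    and pos: "d * (c + pS u i) \<ge> 1"
  defines "w \<equiv> (\<lambda>j. if j = i then (if i = 0 then (u i - d) mod int n else u i - d)
                   else if j = Suc i then (if i = m then (u j + d) mod int n else u j + d) else u j)"
  shows "yoke_adj n m u w \<and> (c - (if i = 0 then d else 0)) mod int n = w 0 mod int n \<and>
         gf m w (c - (if i = 0 then d else 0)) = gf m u c - 1"
proof -
  have np: "int n > 0" using n2 by simp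
  define e where "e = (\<lambda>j. (if j = i then -d else 0) + (if j = Suc i then d else (0::int)))"
  have wmod: "w j mod int n = (u j + e j) mod int n" for j
    unfolding w_def e_def by auto
  have sume: "(\<Sum>j\<le>Suc m. e j) = 0"
    unfolding e_def using im by (simp add: sum.distrib)
  have uv: "0 \<le> u 0 \<and> u 0 < int n \<and> 0 \<le> u (Suc m) \<and> u (Suc m) < int n \<and>
     (\<forall>i. 1 \<le> i \<and> i \<le> m \<longrightarrow> u i \<in> {0, 1}) \<and>
     (\<forall>i. i > Suc m \<longrightarrow> u i = 0) \<and>
     (\<Sum>i\<le>Suc m. u i) mod int n = 0" using yv by (simp add: yoke_vert_def)
  have sumw: "(\<Sum>j\<le>Suc m. w j) mod int n = 0"
  proof -
    have "(\<Sum>j\<le>Suc m. w j) mod int n = (\<Sum>j\<le>Suc m. w j mod int n) mod int n"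
      by (rule mod_sum_eq[symmetric])
    also have "\<dots> = (\<Sum>j\<le>Suc m. (u j + e j) mod int n) mod int n" by (simp add: wmod)
    also have "\<dots> = (\<Sum>j\<le>Suc m. (u j + e j)) mod int n" by (rule mod_sum_eq)
    also have "\<dots> = (\<Sum>j\<le>Suc m. u j) mod int n" by (simp add: sum.distrib sume del: sum.atMost_Suc)
    finally show ?thesis using uv by simp
  qed
  have wv: "yoke_vert n m w"
    unfolding yoke_vert_def
  proof (intro conjI allI impI)
    show "0 \<le> w 0" "w 0 < int n" using uv np unfolding w_def by auto
    show "0 \<le> w (Suc m)" "w (Suc m) < int n" using uv np im unfolding w_def by auto
    show "(\<Sum>j\<le>Suc m. w j) mod int n = 0" by (rule sumw)
  next
    fix j assume "1 \<le> j \<and> j \<le> m"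
    then show "w j \<in> {0, 1}" using uv bi bi1 d unfolding w_def by auto
  next
    fix j assume "Suc m < j"
    then show "w j = 0" using uv im unfolding w_def by auto
  qed
  have adj: "yoke_adj n m u w"
    unfolding yoke_adj_def
  proof (intro conjI yv wv exI[of _ i])
    show "i \<le> m" by (rule im)
    show "\<forall>j\<le>Suc m. j \<noteq> i \<and> j \<noteq> Suc i \<longrightarrow> u j = w j" unfolding w_def by auto
    show "yoke_eq n m i (u i) (w i + 1) \<and> yoke_eq n m (Suc i) (u (Suc i)) (w (Suc i) - 1) \<or>
          yoke_eq n m i (u i) (w i - 1) \<and> yoke_eq n m (Suc i) (u (Suc i)) (w (Suc i) + 1)"
      using d im unfolding w_def yoke_eq_def by (auto simp: mod_simps)
  qed
  have w0: "(c - (if i = 0 then d else 0)) mod int n = w 0 mod int n"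
  proof -
    have "(c - d) mod int n = (u 0 - d) mod int n" by (metis cu mod_diff_left_eq)
    then show ?thesis using cu unfolding w_def by auto
  qed
  have ps: "j \<le> m \<Longrightarrow> pS w j = pS u j + (if i = 0 then (if j = 0 then 0 else d) else (if j = i then -d else 0))" for j
  proof (induction j)
    case 0 then show ?case by simp
  next
    case (Suc j)
    then have IH: "pS w j = pS u j + (if i = 0 then (if j = 0 then 0 else d) else (if j = i then -d else 0))" by simp
    have ws: "w (Suc j) = u (Suc j) + (if Suc j = i then -d else 0) + (if j = i then d else 0)"
      using Suc.prems unfolding w_def by auto
    show ?case using IH ws by auto
  qed
  have g: "gf m w (c - (if i = 0 then d else 0)) = gf m u c - 1"
  proof -
    have "gf m w (c - (if i = 0 then d else 0)) = (\<Sum>j\<le>m. \<bar>c + pS u j\<bar> - (if j = i then 1 else 0))"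
      unfolding gf_def
    proof (rule sum.cong)
      fix j assume "j \<in> {..m}"
      then have "c - (if i = 0 then d else 0) + pS w j = c + pS u j - (if j = i then d else 0)"
        using ps[of j] by auto
      moreover have "\<bar>c + pS u i - d\<bar> = \<bar>c + pS u i\<bar> - 1" using d pos by auto
      ultimately show "\<bar>c - (if i = 0 then d else 0) + pS w j\<bar> = \<bar>c + pS u j\<bar> - (if j = i then 1 else 0)"
        by auto
    qed simp
    also have "\<dots> = gf m u c - 1" unfolding gf_def using im by (simp add: sum_subtractf)
    finally show ?thesis .
  qed
  show ?thesis using adj w0 g by blast
qed

lemma step_ex:
  assumes "yoke_vert n m u" "2 \<le> n" "1 \<le> m" "i \<le> m"
    "d = 1 \<or> d = -1"
    "1 \<le> i \<longrightarrow> u i = (if d = 1 then 1 else 0)"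
    "Suc i \<le> m \<longrightarrow> u (Suc i) = (if d = 1 then 0 else 1)"
    "c mod int n = u 0 mod int n"
    "d * (c + pS u i) \<ge> 1"
  shows "\<exists>w c'. yoke_adj n m u w \<and> c' mod int n = w 0 mod int n \<and> gf m w c' = gf m u c - 1"
  using step[OF assms] by blast

lemma pS_mono:
  assumes "yoke_vert n m u" "j \<le> k" "k \<le> m"
  shows "pS u j \<le> pS u k"
  using assms(2,3)
proof (induction k)
  case 0 then show ?case by simp
next
  case (Suc k)
  have "u (Suc k) \<in> {0,1}" using assms(1) Suc.prems unfolding yoke_vert_def by auto
  then have "u (Suc k) \<ge> 0" by auto
  show ?case
  proof (cases "j = Suc k")
    case True then show ?thesis by simp
  next
    case False
    then have "pS u j \<le> pS u k" using Suc by simp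
    then show ?thesis using \<open>u (Suc k) \<ge> 0\<close> by simp
  qed
qed

lemma zero_case:
  assumes yv: "yoke_vert n m u" and n2: "2 \<le> n" and cu: "c mod int n = u 0 mod int n"
    and g0: "gf m u c = 0"
  shows "u = yoke_zero"
proof -
  have all0: "\<forall>j\<in>{..m}. \<bar>c + pS u j\<bar> = 0"
    using g0 unfolding gf_def by (subst sum_nonneg_eq_0_iff[symmetric]) auto
  then have c0: "c = 0" by (metis abs_eq_0 add.right_neutral atMost_iff le0 pS.simps(1))
  have p0: "j \<le> m \<Longrightarrow> pS u j = 0" for j using all0 c0 by auto
  have uj: "1 \<le> j \<Longrightarrow> j \<le> m \<Longrightarrow> u j = 0" for j
  proof -
    assume "1 \<le> j" "j \<le> m"
    then obtain j' where "j = Suc j'" by (cases j) auto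
    then show "u j = 0" using p0[of j] p0[of j'] \<open>j \<le> m\<close> by simp
  qed
  have uv: "0 \<le> u 0 \<and> u 0 < int n \<and> 0 \<le> u (Suc m) \<and> u (Suc m) < int n \<and>
     (\<forall>i. i > Suc m \<longrightarrow> u i = 0) \<and>
     (\<Sum>i\<le>Suc m. u i) mod int n = 0" using yv by (simp add: yoke_vert_def)
  have u0: "u 0 = 0" using uv cu c0 by (simp add: mod_pos_pos_trivial)
  have "(\<Sum>i\<le>m. u i) = 0" using uj u0 by (intro sum.neutral) (metis atMost_iff less_one not_less)
  then have "u (Suc m) mod int n = 0" using uv by simp
  then have us: "u (Suc m) = 0" using uv by (simp add: mod_pos_pos_trivial)
  show ?thesis
  proof
    fix j show "u j = yoke_zero j"
      unfolding yoke_zero_def using uj u0 us uv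
      by (metis le_neq_implies_less linorder_not_le not_less_eq_eq less_one)
  qed
qed

lemma ub:
  assumes n2: "2 \<le> n" and m1: "1 \<le> m"
  shows "yoke_vert n m u \<Longrightarrow> c mod int n = u 0 mod int n \<Longrightarrow> gf m u c = int N \<Longrightarrow>
         \<exists>k\<le>N. (u, yoke_zero) \<in> yoke_edges n m ^^ k"
proof (induction N arbitrary: u c)
  case 0
  then have "u = yoke_zero" using zero_case n2 by simp
  then show ?case by auto
next
  case (Suc N)
  note yv = Suc.prems(1) and cu = Suc.prems(2) and gN = Suc.prems(3)
  define F where "F = (\<lambda>j. c + pS u j)"
  have Fmono: "j \<le> k \<Longrightarrow> k \<le> m \<Longrightarrow> F j \<le> F k" for j k
    unfolding F_def using pS_mono[OF yv] by simp
  have Fs: "F (Suc j) = F j + u (Suc j)" for j unfolding F_def by simp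
  have bin: "1 \<le> j \<Longrightarrow> j \<le> m \<Longrightarrow> u j = 0 \<or> u j = 1" for j
    using yv unfolding yoke_vert_def by auto
  have "\<exists>w c'. yoke_adj n m u w \<and> c' mod int n = w 0 mod int n \<and> gf m w c' = gf m u c - 1"
  proof (cases "F m > 0")
    case True
    define i where "i = (LEAST j. F j = F m)"
    have im: "i \<le> m" unfolding i_def by (rule Least_le) simp
    have Fi: "F i = F m" unfolding i_def by (rule LeastI[of _ m]) simp
    have Flt: "j < i \<Longrightarrow> F j \<noteq> F m" for j unfolding i_def by (rule not_less_Least)
    show ?thesis
    proof (rule step_ex[OF yv n2 m1 im, of 1])
      show "1 \<le> i \<longrightarrow> u i = (if (1::int) = 1 then 1 else 0)"
      proof
        assume "1 \<le> i"
        then obtain i' where ii: "i = Suc i'" by (cases i) auto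
        have "F i' \<le> F m" using Fmono im ii by simp
        moreover have "F i' \<noteq> F m" using Flt ii by simp
        ultimately show "u i = (if (1::int) = 1 then 1 else 0)"
          using Fs[of i'] Fi ii bin[of i] im by auto
      qed
      show "Suc i \<le> m \<longrightarrow> u (Suc i) = (if (1::int) = 1 then 0 else 1)"
      proof
        assume "Suc i \<le> m"
        then have "F (Suc i) \<le> F m" using Fmono by simp
        then show "u (Suc i) = (if (1::int) = 1 then 0 else 1)"
          using Fs[of i] Fi bin[of "Suc i"] \<open>Suc i \<le> m\<close> by auto
      qed
      show "1 * (c + pS u i) \<ge> 1" using Fi True unfolding F_def by simp
    qed (use cu in auto)
  next
    case False
    show ?thesis
    proof (cases "c < 0")
      case True
      define i where "i = (LEAST j. j = m \<or> F (Suc j) \<noteq> c)"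
      have im: "i \<le> m" unfolding i_def by (rule Least_le) simp
      have Fi': "i = m \<or> F (Suc i) \<noteq> c" unfolding i_def by (rule LeastI[of _ m]) simp
      have Flt: "j < i \<Longrightarrow> F (Suc j) = c" for j
        using not_less_Least[of j "\<lambda>j. j = m \<or> F (Suc j) \<noteq> c"] unfolding i_def by blast
      have Fc: "j \<le> i \<Longrightarrow> F j = c" for j
      proof (induction j)
        case 0 then show ?case unfolding F_def by simp
      next
        case (Suc j) then show ?case using Flt by simp
      qed
      show ?thesis
      proof (rule step_ex[OF yv n2 m1 im, of "-1"])
        show "1 \<le> i \<longrightarrow> u i = (if (-1::int) = 1 then 1 else 0)"
        proof
          assume "1 \<le> i"
          then obtain i' where ii: "i = Suc i'" by (cases i) auto
          show "u i = (if (-1::int) = 1 then 1 else 0)"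
            using Fs[of i'] Fc[of i] Fc[of i'] ii by simp
        qed
        show "Suc i \<le> m \<longrightarrow> u (Suc i) = (if (-1::int) = 1 then 0 else 1)"
        proof
          assume "Suc i \<le> m"
          then have "F (Suc i) \<noteq> c" using Fi' by auto
          then show "u (Suc i) = (if (-1::int) = 1 then 0 else 1)"
            using Fs[of i] Fc[of i] bin[of "Suc i"] \<open>Suc i \<le> m\<close> by auto
        qed
        show "-1 * (c + pS u i) \<ge> 1" using Fc[of i] True unfolding F_def by simp
      qed (use cu in auto)
    next
      case c0: False
      have "\<forall>j\<in>{..m}. \<bar>c + pS u j\<bar> = 0"
      proof
        fix j assume "j \<in> {..m}"
        then have "F 0 \<le> F j" "F j \<le> F m" using Fmono by auto
        then show "\<bar>c + pS u j\<bar> = 0" using False c0 unfolding F_def by simp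
      qed
      then have "gf m u c = 0" unfolding gf_def by simp
      then show ?thesis using gN by simp
    qed
  qed
  then obtain w c' where uw: "yoke_adj n m u w" and cw: "c' mod int n = w 0 mod int n"
    and gw: "gf m w c' = gf m u c - 1" by blast
  have wv: "yoke_vert n m w" using uw unfolding yoke_adj_def by blast
  from Suc.IH[OF wv cw] gw gN obtain k where "k \<le> N" "(w, yoke_zero) \<in> yoke_edges n m ^^ k" by auto
  moreover have "(u, w) \<in> yoke_edges n m" using uw by (simp add: yoke_edges_def)
  ultimately show ?case by (meson Suc_le_mono relpow_Suc_I2)
qed

definition Hq :: "int \<Rightarrow> int \<Rightarrow> int" where "Hq m x = x*(x+1) + (m-x)*(m-x+1)"

definition Gv :: "int \<Rightarrow> int \<Rightarrow> int" where
  "Gv m x = (if x < 0 then (m+1)*(m-2*x) else if x \<le> m then Hq m x else (m+1)*(2*x-m))"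

lemma Hq_diff: "Hq m x - Hq m b = 2*(x-b)*(x+b-m)"
  unfolding Hq_def by (simp add: algebra_simps)

lemma Hq_le: "0 \<le> b \<Longrightarrow> b \<le> m \<Longrightarrow> Hq m b \<le> m*(m+1)"
proof -
  assume "0 \<le> b" "b \<le> m"
  have "Hq m b = m*(m+1) - 2*(b*(m-b))" unfolding Hq_def by (simp add: algebra_simps)
  moreover have "b*(m-b) \<ge> 0" using \<open>0 \<le> b\<close> \<open>b \<le> m\<close> by simp
  ultimately show ?thesis by simp
qed

lemma Gv_out: "0 \<le> m \<Longrightarrow> (x < 0 \<or> x > m) \<Longrightarrow> Gv m x \<ge> m*(m+1)"
proof -
  assume m: "0 \<le> m" and x: "x < 0 \<or> x > m"
  show ?thesis
  proof (cases "x < 0")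
    case True
    have "(m+1)*m \<le> (m+1)*(m-2*x)" using True m by (intro mult_left_mono) auto
    then show ?thesis using True by (simp add: Gv_def algebra_simps)
  next
    case False
    then have "x > m" using x by simp
    have "(m+1)*m \<le> (m+1)*(2*x-m)" using \<open>x > m\<close> m by (intro mult_left_mono) auto
    then show ?thesis using False \<open>x > m\<close> by (simp add: Gv_def algebra_simps)
  qed
qed

lemma kk1: "(k::int)*(k+1) \<ge> 0"
  by (cases "k \<ge> 0") (auto intro: mult_nonneg_nonneg mult_nonpos_nonpos)

lemma arith1:
  fixes m n b x k e :: int
  assumes n: "n \<ge> 2" and b0: "0 \<le> b" and bm: "b \<le> m" and e: "2*b = m+n-e" "e = 0 \<or> e = 1"
    and x: "x = b + k*n"
  shows "Gv m x \<ge> Hq m b"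
proof (cases "x < 0 \<or> x > m")
  case True
  then show ?thesis using Gv_out[OF _ True] Hq_le[OF b0 bm] b0 bm by linarith
next
  case False
  then have G: "Gv m x = Hq m x" by (simp add: Gv_def)
  have "x - b = k*n" "x + b - m = k*n + n - e" using x e by auto
  then have "Hq m x - Hq m b = 2*(k*n)*(k*n + n - e)" using Hq_diff[of m x b] by simp
  moreover have "(k*n)*(k*n + n - e) \<ge> 0"
  proof (cases "k \<ge> 0")
    case True
    then have "k*n \<ge> 0" using n by simp
    then show ?thesis by (rule mult_nonneg_nonneg) (use \<open>k*n \<ge> 0\<close> n e in auto)
  next
    case False
    then have "k*n \<le> -1*n" using n by (intro mult_right_mono) auto
    then show ?thesis using n e by (intro mult_nonpos_nonpos) auto
  qed
  ultimately show ?thesis using G by simp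
qed

lemma arith2:
  fixes m n b x k p :: int
  assumes n: "n \<ge> 2" and b0: "0 \<le> b" and bm: "b \<le> m - 1" and e: "2*b = m+n-1"
    and p: "2*p \<ge> m+1" "p - 1 \<le> b"
    and x: "x = b + k*n"
  shows "Gv (m-1) x + 2*\<bar>p-1-x\<bar> \<ge> Hq (m-1) b + 2*(b-p+1)"
proof (cases "x < 0 \<or> x > m - 1")
  case True
  have h: "Gv (m-1) x \<ge> Hq (m-1) b" using Gv_out[OF _ True] Hq_le[OF b0 bm] b0 bm by linarith
  have "\<bar>p-1-x\<bar> \<ge> b-p+1" using True p bm by auto
  then have "2*(b-p+1) \<le> 2*\<bar>p-1-x\<bar>" by simp
  from add_mono[OF h this] show ?thesis .
next
  case False
  then have G: "Gv (m-1) x = Hq (m-1) x" by (simp add: Gv_def)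
  have "x - b = k*n" "x + b - (m-1) = (k+1)*n" using x e by (auto simp: algebra_simps)
  then have "Hq (m-1) x - Hq (m-1) b = 2*(k*n)*((k+1)*n)" using Hq_diff[of "m-1" x b] by simp
  also have "\<dots> = 2*(k*(k+1))*(n*n)" by (simp add: algebra_simps)
  finally have "Hq (m-1) x - Hq (m-1) b = 2*(k*(k+1))*(n*n)" .
  moreover have "(k*(k+1))*(n*n) \<ge> 0" using kk1 by simp
  moreover have A: "\<bar>p-1-x\<bar> \<ge> b-p+1"
  proof (cases "k \<ge> 0")
    case True
    then have "k*n \<ge> 0" using n by simp
    then show ?thesis using x by auto
  next
    case False
    then have "k*n \<le> -1*n" using n by (intro mult_right_mono) auto
    then show ?thesis using x e p by auto
  qed
  ultimately have h: "Hq (m-1) b \<le> Gv (m-1) x" using G by linarith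
  have "2*(b-p+1) \<le> 2*\<bar>p-1-x\<bar>" using A by simp
  from add_mono[OF h this] show ?thesis .
qed




lemma Gsum: "2 * (\<Sum>i\<le>m. \<bar>int i - x\<bar>) = Gv (int m) x"
proof (induction m)
  case 0 then show ?case by (simp add: Gv_def Hq_def)
next
  case (Suc m)
  have "2 * (\<Sum>i\<le>Suc m. \<bar>int i - x\<bar>) = Gv (int m) x + 2*\<bar>int m + 1 - x\<bar>"
    using Suc by simp
  also have "\<dots> = Gv (int (Suc m)) x"
  proof -
    consider "x < 0" | "0 \<le> x \<and> x \<le> int m" | "x = int m + 1" | "x > int m + 1" by linarith
    then show ?thesis
    proof cases
      case 1 then show ?thesis by (simp add: Gv_def algebra_simps)
    next
      case 2 then show ?thesis by (simp add: Gv_def Hq_def algebra_simps)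
    next
      case 3 then show ?thesis by (simp add: Gv_def Hq_def algebra_simps)
    next
      case 4 then show ?thesis by (simp add: Gv_def Hq_def algebra_simps)
    qed
  qed
  finally show ?case .
qed

lemma reidx:
  assumes "1 \<le> p" "p \<le> M"
  shows "(\<Sum>i\<le>M. h (if i < p then int i else int i - 1)) = (\<Sum>i\<le>M-1. h (int i)) + h (int p - 1)"
  using assms(2)
proof (induction M rule: dec_induct)
  case base
  obtain q where q: "p = Suc q" using assms(1) by (cases p) auto
  have "(\<Sum>i\<le>p. h (if i < p then int i else int i - 1)) =
        (\<Sum>i\<le>q. h (if i < p then int i else int i - 1)) + h (if p < p then int p else int p - 1)"
    unfolding q by (rule sum.atMost_Suc)
  also have "(\<Sum>i\<le>q. h (if i < p then int i else int i - 1)) = (\<Sum>i\<le>q. h (int i))"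
    by (rule sum.cong) (auto simp: q)
  finally show ?case using q by simp
next
  case (step M)
  obtain q where q: "M = Suc q" using step assms(1) by (cases M) auto
  have "(\<Sum>i\<le>Suc M. h (if i < p then int i else int i - 1)) =
        (\<Sum>i\<le>M. h (if i < p then int i else int i - 1)) + h (if Suc M < p then int (Suc M) else int (Suc M) - 1)"
    by (rule sum.atMost_Suc)
  also have "\<dots> = (\<Sum>i\<le>M-1. h (int i)) + h (int p - 1) + h (int M)"
    using step by simp
  moreover have "(\<Sum>i\<le>M-1. h (int i)) + h (int M) = (\<Sum>i\<le>M. h (int i))"
    using q by simp
  ultimately show ?case unfolding diff_Suc_1
    using add.assoc add.commute by (smt (verit))
qed

lemma dist_le:
  assumes n2: "2 \<le> n" and m1: "1 \<le> m" and yv: "yoke_vert n m u"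
    and cu: "c mod int n = u 0 mod int n"
  shows "int (yoke_dist n m u yoke_zero) \<le> gf m u c"
proof -
  have "gf m u c \<ge> 0" unfolding gf_def by (simp add: sum_nonneg)
  then have "gf m u c = int (nat (gf m u c))" by simp
  from ub[OF n2 m1 yv cu this] obtain k where k: "k \<le> nat (gf m u c)"
    "(u, yoke_zero) \<in> yoke_edges n m ^^ k" by blast
  have "yoke_dist n m u yoke_zero \<le> k" unfolding yoke_dist_def by (rule Least_le) (rule k(2))
  then show ?thesis using k(1) \<open>gf m u c \<ge> 0\<close> by linarith
qed

lemma dist_ge:
  assumes n2: "2 \<le> n" and m1: "1 \<le> m" and yv: "yoke_vert n m u"
  shows "\<exists>c. c mod int n = u 0 mod int n \<and> gf m u c \<le> int (yoke_dist n m u yoke_zero)"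
proof -
  have "gf m u (u 0) \<ge> 0" unfolding gf_def by (simp add: sum_nonneg)
  then have "gf m u (u 0) = int (nat (gf m u (u 0)))" by simp
  from ub[OF n2 m1 yv _ this] obtain k where
    "(u, yoke_zero) \<in> yoke_edges n m ^^ k" by blast
  then have "(u, yoke_zero) \<in> yoke_edges n m ^^ (yoke_dist n m u yoke_zero)"
    unfolding yoke_dist_def by (rule LeastI)
  from lb[OF this m1] show ?thesis .
qed

lemma mk_vert:
  assumes n2: "2 \<le> n" and f0: "0 \<le> f 0" "f 0 < int n"
    and fb: "\<And>i. 1 \<le> i \<Longrightarrow> i \<le> m \<Longrightarrow> f i \<in> {0,1}"
  shows "yoke_vert n m (yoke_mk n m f)"
proof -
  have np: "int n > 0" using n2 by simp
  have s1: "(\<Sum>i\<le>Suc m. yoke_mk n m f i) = (\<Sum>i\<le>m. yoke_mk n m f i) + yoke_mk n m f (Suc m)"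
    by (rule sum.atMost_Suc)
  have s2: "(\<Sum>i\<le>m. yoke_mk n m f i) = (\<Sum>i\<le>m. f i)"
    by (rule sum.cong) (auto simp: yoke_mk_def)
  have s3: "yoke_mk n m f (Suc m) = (- (\<Sum>j\<le>m. f j)) mod int n"
    by (simp add: yoke_mk_def)
  have "(\<Sum>i\<le>Suc m. yoke_mk n m f i) mod int n = ((\<Sum>j\<le>m. f j) + (- (\<Sum>j\<le>m. f j)) mod int n) mod int n"
    using s1 s2 s3 by simp
  also have "\<dots> = 0" by (simp add: mod_add_right_eq)
  finally have S: "(\<Sum>i\<le>Suc m. yoke_mk n m f i) mod int n = 0" .
  show ?thesis unfolding yoke_vert_def
  proof (intro conjI allI impI S)
    show "0 \<le> yoke_mk n m f 0" "yoke_mk n m f 0 < int n" using f0 by (auto simp: yoke_mk_def)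
    show "0 \<le> yoke_mk n m f (Suc m)" "yoke_mk n m f (Suc m) < int n" using np s3 by auto
  next
    fix i assume "1 \<le> i \<and> i \<le> m"
    then show "yoke_mk n m f i \<in> {0,1}" using fb by (auto simp: yoke_mk_def)
  next
    fix i assume "Suc m < i"
    then show "yoke_mk n m f i = 0" by (auto simp: yoke_mk_def)
  qed
qed

lemma pS_mk: "j \<le> m \<Longrightarrow> pS (yoke_mk n m f) j = pS f j"
  by (induction j) (auto simp: yoke_mk_def)

lemma pS_ones: "pS (\<lambda>i. if i = 0 then z else 1) j = int j"
  by (induction j) auto

lemma pS_hole: "1 \<le> p \<Longrightarrow> pS (\<lambda>i. if i = 0 then z else if i = p then 0 else 1) j = (if j < p then int j else int j - 1)"
  by (induction j) auto



lemma choose2: "2 * (y + 1 choose 2) = y * (y + 1)"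
  by (induction y) (auto simp: numeral_2_eq_2)

lemma gf_ones:
  assumes "2 \<le> n"
  shows "2 * gf m (yoke_mk n m (\<lambda>i. if i = 0 then z else 1)) c = Gv (int m) (-c)"
proof -
  have "gf m (yoke_mk n m (\<lambda>i. if i = 0 then z else 1)) c = (\<Sum>i\<le>m. \<bar>int i - (-c)\<bar>)"
    unfolding gf_def by (rule sum.cong) (auto simp: pS_mk pS_ones)
  then show ?thesis using Gsum[of "-c" m] by simp
qed

lemma gf_hole:
  assumes "2 \<le> n" "1 \<le> p" "p \<le> m"
  shows "2 * gf m (yoke_mk n m (\<lambda>i. if i = 0 then z else if i = p then 0 else 1)) c
         = Gv (int m - 1) (-c) + 2 * \<bar>int p - 1 - (-c)\<bar>"
proof -
  have "gf m (yoke_mk n m (\<lambda>i. if i = 0 then z else if i = p then 0 else 1)) c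
      = (\<Sum>i\<le>m. (\<lambda>s. \<bar>c + s\<bar>) (if i < p then int i else int i - 1))"
    unfolding gf_def by (rule sum.cong) (use assms in \<open>auto simp: pS_mk pS_hole\<close>)
  also have "\<dots> = (\<Sum>i\<le>m-1. \<bar>c + int i\<bar>) + \<bar>c + (int p - 1)\<bar>"
    by (rule reidx[OF assms(2,3)])
  also have "(\<Sum>i\<le>m-1. \<bar>c + int i\<bar>) = (\<Sum>i\<le>m-1. \<bar>int i - (-c)\<bar>)"
    by (rule sum.cong) (auto simp: add.commute)
  finally have "2 * gf m (yoke_mk n m (\<lambda>i. if i = 0 then z else if i = p then 0 else 1)) c
      = 2 * (\<Sum>i\<le>m-1. \<bar>int i - (-c)\<bar>) + 2 * \<bar>c + (int p - 1)\<bar>" by simp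
  also have "2 * (\<Sum>i\<le>m-1. \<bar>int i - (-c)\<bar>) = Gv (int (m-1)) (-c)" by (rule Gsum)
  also have "int (m-1) = int m - 1" using assms by simp
  also have "\<bar>c + (int p - 1)\<bar> = \<bar>int p - 1 - (-c)\<bar>" by simp
  finally show ?thesis .
qed

lemma cong_shift:
  assumes "c mod int n = (- int a) mod int n" "b = a + n"
  shows "\<exists>k. - c = int b + k * int n"
proof -
  have "int n dvd c - (- int a)" using assms(1) by (simp add: mod_eq_dvd_iff)
  then obtain t where "c + int a = int n * t" by (auto elim: dvdE)
  then have "- c = int b + (-(t+1)) * int n" using assms(2) by (simp add: algebra_simps)
  then show ?thesis by blast
qed

theorem lemma4p24:
  fixes n m :: nat
  assumes "2 \<le> n" and "n \<le> m"
  defines "u0 \<equiv> yoke_mk n m (\<lambda>i. if i = 0 then (- int ((m - n) div 2)) mod int n else 1)"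
  defines "d0 \<equiv> yoke_dist n m u0 yoke_zero"
  shows "d0 = ((m + n) div 2 + 1 choose 2) + ((m - n + 1) div 2 + 1 choose 2) \<and>
         (odd (m - n) \<longrightarrow>
           (let u1 = yoke_mk n m (\<lambda>i. if i = 0 then (- int ((m - n) div 2)) mod int n
                                      else if i = (m + 2) div 2 then 0 else 1)
            in int (yoke_dist n m u1 yoke_zero) = int d0 + int n - int ((m + 2) div 2)))"
proof -
  note n2 = assms(1)
  have m1: "1 \<le> m" using assms by simp
  have np: "int n > 0" using n2 by simp
  define a where "a = (m - n) div 2"
  define b where "b = (m + n) div 2"
  have ab: "b = a + n" unfolding a_def b_def using assms(2) by presburger
  have bm: "b \<le> m" unfolding b_def using assms(2) by presburger
  have mb: "(m - n + 1) div 2 = m - b" unfolding b_def using assms(2) by presburger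
  have e2: "2 * int b = int m + int n - int ((m + n) mod 2)" unfolding b_def by presburger
  have a0: "0 \<le> (- int a) mod int n" "(- int a) mod int n < int n" using np by auto
  have ab_mod: "(- int b) mod int n = (- int a) mod int n"
  proof -
    have "- int b = - int a + (-1) * int n" using ab by simp
    then show ?thesis by (metis mod_mult_self1)
  qed
  have u0v: "yoke_vert n m u0" unfolding u0_def
    by (rule mk_vert[OF n2]) (use a0 in \<open>auto simp: a_def\<close>)
  have u00: "u0 0 mod int n = (- int a) mod int n" unfolding u0_def a_def by (simp add: yoke_mk_def)
  have g0: "2 * gf m u0 c = Gv (int m) (-c)" for c unfolding u0_def by (rule gf_ones[OF n2])
  have Hb: "Gv (int m) (int b) = Hq (int m) (int b)" using bm by (simp add: Gv_def)
  have d0eq: "2 * int d0 = Hq (int m) (int b)"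
  proof (rule antisym)
    have "int d0 \<le> gf m u0 (- int b)" unfolding d0_def
      by (rule dist_le[OF n2 m1 u0v]) (simp add: u00 ab_mod)
    then show "2 * int d0 \<le> Hq (int m) (int b)" using g0[of "- int b"] Hb by simp
  next
    obtain c where c: "c mod int n = u0 0 mod int n" "gf m u0 c \<le> int d0"
      using dist_ge[OF n2 m1 u0v] unfolding d0_def by blast
    obtain k where k: "- c = int b + k * int n" using cong_shift[OF _ ab] c(1) u00 by auto
    have "Gv (int m) (-c) \<ge> Hq (int m) (int b)"
      by (rule arith1[OF _ _ _ e2 _ k]) (use n2 bm in \<open>auto simp: mod2_eq_if\<close>)
    then show "Hq (int m) (int b) \<le> 2 * int d0" using g0[of c] c(2) by simp
  qed
  have part1: "d0 = ((m + n) div 2 + 1 choose 2) + ((m - n + 1) div 2 + 1 choose 2)"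
  proof -
    have "2 * int (((m + n) div 2 + 1 choose 2) + ((m - n + 1) div 2 + 1 choose 2))
        = int (b * (b+1)) + int ((m-b) * (m-b+1))"
    proof -
      have A: "int (2 * (b + 1 choose 2)) = int (b * (b+1))" using choose2[of b] by presburger
      have B: "int (2 * (m - b + 1 choose 2)) = int ((m-b) * (m-b+1))" using choose2[of "m-b"] by presburger
      show ?thesis unfolding mb b_def[symmetric] using A B by simp
    qed
    also have "\<dots> = Hq (int m) (int b)"
    proof -
      have D: "int (m - b) = int m - int b" using bm by simp
      show ?thesis unfolding Hq_def of_nat_mult of_nat_add of_nat_1 D by simp
    qed
    finally show ?thesis using d0eq by simp
  qed
  have part2: "odd (m - n) \<longrightarrow>
           (let u1 = yoke_mk n m (\<lambda>i. if i = 0 then (- int ((m - n) div 2)) mod int n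
                                      else if i = (m + 2) div 2 then 0 else 1)
            in int (yoke_dist n m u1 yoke_zero) = int d0 + int n - int ((m + 2) div 2))"
  proof
    assume odd: "odd (m - n)"
    define p where "p = (m + 2) div 2"
    define u1 where "u1 = yoke_mk n m (\<lambda>i. if i = 0 then (- int ((m - n) div 2)) mod int n
                                      else if i = p then 0 else 1)"
    have e1: "2 * int b = int m + int n - 1" unfolding b_def using odd assms(2) by presburger
    have p1: "1 \<le> p" "p \<le> m" unfolding p_def using assms by auto
    have p2: "2 * int p \<ge> int m + 1" "int p - 1 \<le> int b" unfolding p_def b_def by presburger+
    have bm1: "int b \<le> int m - 1" using e1 assms(2) odd by presburger
    have u1v: "yoke_vert n m u1" unfolding u1_def
      by (rule mk_vert[OF n2]) (use a0 in \<open>auto simp: a_def\<close>)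
    have u10: "u1 0 mod int n = (- int a) mod int n" unfolding u1_def a_def by (simp add: yoke_mk_def)
    have g1: "2 * gf m u1 c = Gv (int m - 1) (-c) + 2 * \<bar>int p - 1 - (-c)\<bar>" for c
      unfolding u1_def by (rule gf_hole[OF n2 p1])
    have Hb1: "Gv (int m - 1) (int b) = Hq (int m - 1) (int b)" using bm1 by (simp add: Gv_def)
    have d1eq: "2 * int (yoke_dist n m u1 yoke_zero) = Hq (int m - 1) (int b) + 2 * (int b - int p + 1)"
    proof (rule antisym)
      have "int (yoke_dist n m u1 yoke_zero) \<le> gf m u1 (- int b)"
        by (rule dist_le[OF n2 m1 u1v]) (simp add: u10 ab_mod)
      then show "2 * int (yoke_dist n m u1 yoke_zero) \<le> Hq (int m - 1) (int b) + 2 * (int b - int p + 1)"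
        using g1[of "- int b"] Hb1 p2 by simp
    next
      obtain c where c: "c mod int n = u1 0 mod int n" "gf m u1 c \<le> int (yoke_dist n m u1 yoke_zero)"
        using dist_ge[OF n2 m1 u1v] by blast
      obtain k where k: "- c = int b + k * int n" using cong_shift[OF _ ab] c(1) u10 by auto
      have "Gv (int m - 1) (-c) + 2 * \<bar>int p - 1 - (-c)\<bar> \<ge> Hq (int m - 1) (int b) + 2 * (int b - int p + 1)"
        by (rule arith2[OF _ _ bm1 e1 p2 k]) (use n2 in auto)
      then show "Hq (int m - 1) (int b) + 2 * (int b - int p + 1) \<le> 2 * int (yoke_dist n m u1 yoke_zero)"
        using g1[of c] c(2) by simp
    qed
    have "Hq (int m) (int b) = Hq (int m - 1) (int b) + 2 * (int m - int b)"
      unfolding Hq_def by (simp add: algebra_simps)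
    then have "int (yoke_dist n m u1 yoke_zero) = int d0 + int n - int p"
      using d1eq d0eq e1 by (smt (verit))
    then show "let u1 = yoke_mk n m (\<lambda>i. if i = 0 then (- int ((m - n) div 2)) mod int n
                                      else if i = (m + 2) div 2 then 0 else 1)
            in int (yoke_dist n m u1 yoke_zero) = int d0 + int n - int ((m + 2) div 2)"
      unfolding u1_def p_def Let_def .
  qed
  show ?thesis using part1 part2 by blast
qed

end
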